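(* Consider the AdaDROPS scheme described in the context (with either Option I or Option II), let $\bar{\mathcal{I}}$ be the set at which $\mathcal{I}^{(k)}$ eventually stabilizes, and assume the iterates $x^{(k)}$ converge to some $\tilde{x}\in\mathbb{R}^n$. Let $\tilde\beta=-\frac1\lambda A^\top(A\tilde{x}-y)$, $\bar L=L-P_{T_z(\bar{\mathcal{I}})}LP_{T(\bar{\mathcal{I}})^\perp}$ and $\bar u=\bar L(\bar L^\top\bar L)^{-1}\tilde\beta$. Then $\|\bar u_{J_t}\|\le1$ for every $t\in\{1,\dots,N\}\setminus\bar{\mathcal{I}}$.
   Context: Let $n,N\in\mathbb{N}$, let $G_1,\dots,G_N\subseteq\{1,\dots,n\}$ be nonempty groups, possibly overlapping, with $\bigcup_iG_i=\{1,\dots,n\}$, and weights $w_i>0$. $x_G$ is the subvector of $x$ indexed by $G$ (increasing order). Let $p=\sum_i|G_i|$, partition $\{1,\dots,p\}$ into consecutive blocks $J_i=\{\sum_{j<i}|G_j|+1,\dots,\sum_{j\le i}|G_j|\}$, and define $L\in\mathbb{R}^{p\times n}$ by $(Lx)_{J_i}=w_ix_{G_i}$; $\|z\|_{1,2}=\sum_i\|z_{J_i}\|$ (Euclidean). Let $A\in\mathbb{R}^{m\times n}$, $y\in\mathbb{R}^m$, $\lambda>0$. For $\mathcal{I}\subseteq\{1,\dots,N\}$: $\mathcal{E}(\mathcal{I})=\{1,\dots,n\}\setminus\bigcup_{t\notin\mathcal{I}}G_t$, $T(\mathcal{I})=\{x:\mathrm{supp}(x)\subseteq\mathcal{E}(\mathcal{I})\}$,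 $\mathcal{E}_z(\mathcal{I})=\bigcup_{t\in\mathcal{I}}J_t$, $T_z(\mathcal{I})=\{z:\mathrm{supp}(z)\subseteq\mathcal{E}_z(\mathcal{I})\}$, $\widehat{L}(\mathcal{I})=L-P_{T_z(\mathcal{I})}LP_{T(\mathcal{I})^\perp}$, with $P_T$ the orthogonal (coordinate) projection onto $T$; $\widehat{L}(\mathcal{I})^\top\widehat{L}(\mathcal{I})$ is invertible. AdaDROPS scheme: from $\mathcal{I}^{(0)}$, $x^{(0)}$, at step $k$ an inner solver produces $x^{(k+1)}$ (for the problem $\min_x\frac1{2\lambda}\|AP_{T(\mathcal{I}^{(k)})}x-y\|^2+\|LP_{T(\mathcal{I}^{(k)})}x\|_{1,2}$); with $\beta^{(k+1)}=-\frac1\lambda A^\top(Ax^{(k+1)}-y)$ the index set is updated by Option I: $\mathcal{I}^{(k+1)}=\mathcal{I}^{(k)}\cup\{t:\|\beta^{(k+1)}_{G_t}\|\ge w_t\}$, or Option II: with $u^{(k+1)}=\widehat{L}(\mathcal{I}^{(k)})(\widehat{L}(\mathcal{I}^{(k)})^\top\widehat{L}(\mathcal{I}^{(k)}))^{-1}\beta^{(k+1)}$, $\mathcal{I}^{(k+1)}=\mathcal{I}^{(k)}\cup\{t:\|u^{(k+1)}_{J_t}\|\ge1\}$. The nondecreasing sequence $\mathcal{I}^{(k)}$ stabilizes at some $\bar{\mathcal{I}}$. *)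

theory Defs
  imports "Jordan_Normal_Form.Matrix"
begin

text \<open>Conventions: all indices are 0-based. Coordinates of x are 0..<n, groups are
  indexed 0..<N, G t is a subset of {0..<n}, and the rows of L are 0..<p.\<close>

definition grp_off :: "(nat \<Rightarrow> nat set) \<Rightarrow> nat \<Rightarrow> nat" where
  "grp_off G i = (\<Sum>j<i. card (G j))"

definition Jblk :: "(nat \<Rightarrow> nat set) \<Rightarrow> nat \<Rightarrow> nat set" where
  "Jblk G t = {grp_off G t ..< grp_off G (Suc t)}"

text \<open>The matrix L (p x n, p = grp_off G N): (L x)_{J_t} = w_t x_{G_t}, G_t in increasing order.\<close>
definition Lmat :: "nat \<Rightarrow> nat \<Rightarrow> (nat \<Rightarrow> nat set) \<Rightarrow> (nat \<Rightarrow> real) \<Rightarrow> real mat" where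
  "Lmat n N G w = mat (grp_off G N) n (\<lambda>(r, c).
     \<Sum>t<N. if r \<in> Jblk G t \<and> c = sorted_list_of_set (G t) ! (r - grp_off G t) then w t else 0)"

definition subnorm :: "real vec \<Rightarrow> nat set \<Rightarrow> real" where
  "subnorm v S = sqrt (\<Sum>i\<in>S. (v $ i)\<^sup>2)"

definition Eset :: "nat \<Rightarrow> nat \<Rightarrow> (nat \<Rightarrow> nat set) \<Rightarrow> nat set \<Rightarrow> nat set" where
  "Eset n N G I = {0..<n} - (\<Union>t\<in>{0..<N} - I. G t)"

definition Ezset :: "(nat \<Rightarrow> nat set) \<Rightarrow> nat set \<Rightarrow> nat set" where
  "Ezset G I = (\<Union>t\<in>I. Jblk G t)"

definition coord_proj :: "nat \<Rightarrow> nat set \<Rightarrow> real mat" where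
  "coord_proj d S = mat d d (\<lambda>(i, j). if i = j \<and> i \<in> S then 1 else 0)"

text \<open>L-hat(I) = L - P_{T_z(I)} L P_{T(I)^\<bottom>}.\<close>
definition Lhat :: "nat \<Rightarrow> nat \<Rightarrow> (nat \<Rightarrow> nat set) \<Rightarrow> (nat \<Rightarrow> real) \<Rightarrow> nat set \<Rightarrow> real mat" where
  "Lhat n N G w I = Lmat n N G w
     - coord_proj (grp_off G N) (Ezset G I) * Lmat n N G w
       * (1\<^sub>m n - coord_proj n (Eset n N G I))"

definition mat_inv :: "real mat \<Rightarrow> real mat" where
  "mat_inv M = (SOME B. inverts_mat M B \<and> inverts_mat B M)"

definition beta_of :: "real mat \<Rightarrow> real vec \<Rightarrow> real \<Rightarrow> real vec \<Rightarrow> real vec" where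
  "beta_of A y lam x = (- (1 / lam)) \<cdot>\<^sub>v (transpose_mat A *\<^sub>v (A *\<^sub>v x - y))"

definition u_of :: "nat \<Rightarrow> nat \<Rightarrow> (nat \<Rightarrow> nat set) \<Rightarrow> (nat \<Rightarrow> real) \<Rightarrow> nat set \<Rightarrow> real vec \<Rightarrow> real vec" where
  "u_of n N G w I b = (let M = Lhat n N G w I in
     M * mat_inv (transpose_mat M * M) *\<^sub>v b)"

definition ada_option1 where
  "ada_option1 N G w A y lam (Is :: nat \<Rightarrow> nat set) (x :: nat \<Rightarrow> real vec) \<longleftrightarrow>
     (\<forall>k. Is (Suc k) = Is k \<union>
        {t \<in> {0..<N}. subnorm (beta_of A y lam (x (Suc k))) (G t) \<ge> w t})"

definition ada_option2 where
  "ada_option2 n N G w A y lam (Is :: nat \<Rightarrow> nat set) (x :: nat \<Rightarrow> real vec) \<longleftrightarrow>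
     (\<forall>k. Is (Suc k) = Is k \<union>
        {t \<in> {0..<N}. subnorm (u_of n N G w (Is k) (beta_of A y lam (x (Suc k)))) (Jblk G t) \<ge> 1})"

end

theory Submission
  imports Defs
begin

lemma mv_tendsto:
  fixes v :: "nat \<Rightarrow> real vec" and Q :: "real mat"
  assumes "\<forall>i<d. (\<lambda>k. v k $ i) \<longlonglongrightarrow> v' $ i" "\<forall>k. dim_vec (v k) = d" "dim_vec v' = d"
    "r < dim_row Q"
  shows "(\<lambda>k. (Q *\<^sub>v v k) $ r) \<longlonglongrightarrow> (Q *\<^sub>v v') $ r"
proof -
  have "(\<lambda>k. \<Sum>i = 0..<d. row Q r $ i * v k $ i) \<longlonglongrightarrow> (\<Sum>i = 0..<d. row Q r $ i * v' $ i)"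
  proof (rule tendsto_sum)
    fix i assume "i \<in> {0..<d}"
    then have "(\<lambda>k. v k $ i) \<longlonglongrightarrow> v' $ i" using assms(1) by auto
    then show "(\<lambda>k. row Q r $ i * v k $ i) \<longlonglongrightarrow> row Q r $ i * v' $ i"
      by (rule tendsto_mult_left)
  qed
  then show ?thesis using assms by (simp add: scalar_prod_def)
qed

lemma beta_tendsto:
  assumes A: "A \<in> carrier_mat m n" and y: "y \<in> carrier_vec m" and x: "\<forall>k. x k \<in> carrier_vec n"
    and xt: "xt \<in> carrier_vec n" and c: "\<forall>i<n. (\<lambda>k. x k $ i) \<longlonglongrightarrow> xt $ i"
  shows "\<forall>j<n. (\<lambda>k. beta_of A y lam (x k) $ j) \<longlonglongrightarrow> beta_of A y lam xt $ j"
proof -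
  have h1: "\<forall>i<m. (\<lambda>k. (A *\<^sub>v x k) $ i) \<longlonglongrightarrow> (A *\<^sub>v xt) $ i"
    using mv_tendsto[of n x xt _ A] A x xt c by auto
  have h2: "\<forall>i<m. (\<lambda>k. (A *\<^sub>v x k - y) $ i) \<longlonglongrightarrow> (A *\<^sub>v xt - y) $ i"
    using h1 y by (auto intro!: tendsto_diff)
  have h3: "\<forall>i<n. (\<lambda>k. (transpose_mat A *\<^sub>v (A *\<^sub>v x k - y)) $ i) \<longlonglongrightarrow> (transpose_mat A *\<^sub>v (A *\<^sub>v xt - y)) $ i"
    using mv_tendsto[of m "\<lambda>k. A *\<^sub>v x k - y" "A *\<^sub>v xt - y" _ "transpose_mat A"] h2 A y by auto
  show ?thesis
  proof (intro allI impI)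
    fix j assume j: "j < n"
    have "(\<lambda>k. (- (1 / lam)) * (transpose_mat A *\<^sub>v (A *\<^sub>v x k - y)) $ j) \<longlonglongrightarrow>
       (- (1 / lam)) * (transpose_mat A *\<^sub>v (A *\<^sub>v xt - y)) $ j"
      by (rule tendsto_mult_left) (use h3 j in auto)
    then show "(\<lambda>k. beta_of A y lam (x k) $ j) \<longlonglongrightarrow> beta_of A y lam xt $ j"
      using j A unfolding beta_of_def by simp
  qed
qed

lemma subnorm_tendsto:
  fixes v :: "nat \<Rightarrow> real vec"
  assumes "finite S" "\<forall>i\<in>S. (\<lambda>k. v k $ i) \<longlonglongrightarrow> v' $ i"
  shows "(\<lambda>k. subnorm (v k) S) \<longlonglongrightarrow> subnorm v' S"
  unfolding subnorm_def using assms by (auto intro!: tendsto_real_sqrt tendsto_sum tendsto_power)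

lemma off_mono: "a \<le> b \<Longrightarrow> grp_off G a \<le> grp_off G b"
  unfolding grp_off_def by (rule sum_mono2) auto

lemma off_Suc: "grp_off G (Suc t) = grp_off G t + card (G t)"
  unfolding grp_off_def by simp

lemma J_disj: "r \<in> Jblk G t \<Longrightarrow> r \<in> Jblk G s \<Longrightarrow> t = s"
proof (rule ccontr)
  assume a: "r \<in> Jblk G t" "r \<in> Jblk G s" "t \<noteq> s"
  show False
  proof (cases "t < s")
    case True
    then have "grp_off G (Suc t) \<le> grp_off G s" by (intro off_mono) auto
    then show False using a unfolding Jblk_def by auto
  next
    case False
    then have "grp_off G (Suc s) \<le> grp_off G t" using a by (intro off_mono) auto
    then show False using a unfolding Jblk_def by auto
  qed
qed

lemma cp_left:
  fixes X :: "real mat"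
  assumes "X \<in> carrier_mat d k" "i < d" "j < k"
  shows "(coord_proj d S * X) $$ (i,j) = (if i \<in> S then X $$ (i,j) else 0)"
proof -
  have "(coord_proj d S * X) $$ (i,j) = (\<Sum>l\<in>{0..<d}. (if i = l \<and> i \<in> S then 1 else 0) * X $$ (l,j))"
    using assms by (simp add: coord_proj_def scalar_prod_def row_def col_def)
  also have "\<dots> = (\<Sum>l\<in>{0..<d}. if l = i then (if i \<in> S then X $$ (i,j) else 0) else 0)"
    by (rule sum.cong) auto
  also have "\<dots> = (if i \<in> S then X $$ (i,j) else 0)" using assms by simp
  finally show ?thesis .
qed

lemma cp_right:
  fixes X :: "real mat"
  assumes "X \<in> carrier_mat d k" "i < d" "j < k"
  shows "(X * (1\<^sub>m k - coord_proj k S)) $$ (i,j) = (if j \<in> S then 0 else X $$ (i,j))"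
proof -
  have "(X * (1\<^sub>m k - coord_proj k S)) $$ (i,j) = (\<Sum>l\<in>{0..<k}. X $$ (i,l) * (if l = j \<and> j \<notin> S then 1 else 0))"
    using assms by (auto simp add: coord_proj_def scalar_prod_def row_def col_def intro!: sum.cong)
  also have "\<dots> = (\<Sum>l\<in>{0..<k}. if l = j then (if j \<in> S then 0 else X $$ (i,j)) else 0)"
    by (rule sum.cong) auto
  also have "\<dots> = (if j \<in> S then 0 else X $$ (i,j))" using assms by simp
  finally show ?thesis .
qed

lemma Lmat_carrier: "Lmat n N G w \<in> carrier_mat (grp_off G N) n"
  unfolding Lmat_def by simp

lemma cp_carrier: "coord_proj d S \<in> carrier_mat d d"
  unfolding coord_proj_def by (rule mat_carrier)

lemma cpc_carrier: "1\<^sub>m d - coord_proj d S \<in> carrier_mat d d"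
  by (rule minus_carrier_mat[OF cp_carrier])

lemma Lhat_carrier: "Lhat n N G w I \<in> carrier_mat (grp_off G N) n"
  unfolding Lhat_def
  by (rule minus_carrier_mat, rule mult_carrier_mat[OF mult_carrier_mat[OF cp_carrier Lmat_carrier] cpc_carrier])

lemma Lhat_entry:
  assumes "r < grp_off G N" "c < n"
  shows "Lhat n N G w I $$ (r,c) =
    (if r \<in> Ezset G I \<and> c \<notin> Eset n N G I then 0 else Lmat n N G w $$ (r,c))"
proof -
  let ?L = "Lmat n N G w" and ?p = "grp_off G N"
  have c1: "?L * (1\<^sub>m n - coord_proj n (Eset n N G I)) \<in> carrier_mat ?p n"
    by (rule mult_carrier_mat[OF Lmat_carrier cpc_carrier])
  have "(coord_proj ?p (Ezset G I) * ?L * (1\<^sub>m n - coord_proj n (Eset n N G I))) $$ (r,c)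
     = (coord_proj ?p (Ezset G I) * (?L * (1\<^sub>m n - coord_proj n (Eset n N G I)))) $$ (r,c)"
    using Lmat_carrier unfolding coord_proj_def
    by (subst assoc_mult_mat[where n\<^sub>1 = ?p and n\<^sub>2 = ?p and n\<^sub>3 = n and n\<^sub>4 = n]) auto
  also have "\<dots> = (if r \<in> Ezset G I then (if c \<in> Eset n N G I then 0 else ?L $$ (r,c)) else 0)"
    using cp_left[OF c1 assms] cp_right[OF Lmat_carrier assms] by simp
  finally have e: "(coord_proj ?p (Ezset G I) * ?L * (1\<^sub>m n - coord_proj n (Eset n N G I))) $$ (r,c) =
     (if r \<in> Ezset G I then (if c \<in> Eset n N G I then 0 else ?L $$ (r,c)) else 0)" .
  have "Lhat n N G w I $$ (r,c) = ?L $$ (r,c) - (coord_proj ?p (Ezset G I) * ?L * (1\<^sub>m n - coord_proj n (Eset n N G I))) $$ (r,c)"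
    unfolding Lhat_def using assms c1 Lmat_carrier[of n N G w]
    by (subst index_minus_mat) (auto simp: coord_proj_def)
  then show ?thesis using e by auto
qed

lemma Lmat_index:
  assumes "r < grp_off G N" "c < n"
  shows "Lmat n N G w $$ (r,c) = (\<Sum>t<N. if r \<in> Jblk G t \<and> c = sorted_list_of_set (G t) ! (r - grp_off G t) then w t else 0)"
  unfolding Lmat_def by (subst index_mat(1)) (use assms in auto)

lemma Lmat_blk:
  assumes "s < N" "r \<in> Jblk G s" "c < n"
  shows "Lmat n N G w $$ (r,c) = (if c = sorted_list_of_set (G s) ! (r - grp_off G s) then w s else 0)"
proof -
  have "Suc s \<le> N" using assms by simp
  then have "grp_off G (Suc s) \<le> grp_off G N" by (rule off_mono)
  moreover have "r < grp_off G (Suc s)" using assms(2) unfolding Jblk_def by simp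
  ultimately have rp: "r < grp_off G N" by linarith
  have "Lmat n N G w $$ (r,c) = (\<Sum>t<N. if r \<in> Jblk G t \<and> c = sorted_list_of_set (G t) ! (r - grp_off G t) then w t else 0)"
    by (rule Lmat_index[OF rp assms(3)])
  also have "\<dots> = (\<Sum>t<N. if t = s then (if c = sorted_list_of_set (G s) ! (r - grp_off G s) then w s else 0) else 0)"
  proof (rule sum.cong)
    fix t assume "t \<in> {..<N}"
    show "(if r \<in> Jblk G t \<and> c = sorted_list_of_set (G t) ! (r - grp_off G t) then w t else 0) =
      (if t = s then (if c = sorted_list_of_set (G s) ! (r - grp_off G s) then w s else 0) else 0)"
      using J_disj[of r G t s] assms(2) by (cases "t = s") (simp_all, blast)
  qed simp
  also have "\<dots> = (if c = sorted_list_of_set (G s) ! (r - grp_off G s) then w s else 0)"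
    using assms(1) by (subst sum.delta) simp_all
  finally show ?thesis .
qed

lemma Lmat_nz:
  assumes "r < grp_off G N" "c < n" "Lmat n N G w $$ (r,c) \<noteq> 0"
  shows "\<exists>t<N. r \<in> Jblk G t \<and> c = sorted_list_of_set (G t) ! (r - grp_off G t)"
proof (rule ccontr)
  assume "\<not> ?thesis"
  then have h: "\<And>t. t \<in> {..<N} \<Longrightarrow> (if r \<in> Jblk G t \<and> c = sorted_list_of_set (G t) ! (r - grp_off G t) then w t else 0) = 0"
    by auto
  have "Lmat n N G w $$ (r,c) = (\<Sum>t<N. if r \<in> Jblk G t \<and> c = sorted_list_of_set (G t) ! (r - grp_off G t) then w t else 0)"
    by (rule Lmat_index[OF assms(1,2)])
  also have "\<dots> = 0" by (rule sum.neutral) (use h in blast)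
  finally show False using assms by simp
qed

lemma shift_bij: "bij_betw (\<lambda>r. r - a) {a..<a+k} {..<(k::nat)}"
  unfolding bij_betw_def inj_on_def
proof (intro conjI ballI impI)
  show "(\<lambda>r. r - a) ` {a..<a + k} = {..<k}"
  proof
    show "{..<k} \<subseteq> (\<lambda>r. r - a) ` {a..<a + k}"
    proof
      fix x assume "x \<in> {..<k}"
      then have "x + a \<in> {a..<a+k}" "x = (x + a) - a" by auto
      then show "x \<in> (\<lambda>r. r - a) ` {a..<a + k}" by blast
    qed
  qed auto
qed auto

lemma Mnz:
  assumes "r < grp_off G N" "c < n" "Lhat n N G w I $$ (r,c) \<noteq> 0"
  shows "\<exists>s<N. r \<in> Jblk G s \<and> c = sorted_list_of_set (G s) ! (r - grp_off G s)"
proof -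
  have "Lmat n N G w $$ (r,c) \<noteq> 0" using assms Lhat_entry[OF assms(1,2)] by (auto split: if_splits)
  then show ?thesis by (rule Lmat_nz[OF assms(1,2)])
qed

lemma Dentry:
  fixes M :: "real mat"
  assumes "M \<in> carrier_mat p n" "i < n" "j < n"
  shows "(transpose_mat M * M) $$ (i,j) = (\<Sum>r\<in>{0..<p}. M $$ (r,i) * M $$ (r,j))"
  using assms by (auto simp: scalar_prod_def intro!: sum.cong)

lemma alg:
  fixes b :: "real vec"
  assumes G_sub: "\<forall>t<N. G t \<subseteq> {0..<n}" and w_pos: "\<forall>t<N. w t > 0"
    and inv: "invertible_mat (transpose_mat (Lhat n N G w I) * Lhat n N G w I)"
    and t: "t < N" "t \<notin> I" and b: "b \<in> carrier_vec n" and bn: "subnorm b (G t) \<le> w t"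
  shows "subnorm (u_of n N G w I b) (Jblk G t) \<le> 1"
proof -
  define M where "M = Lhat n N G w I"
  define p where "p = grp_off G N"
  define D where "D = transpose_mat M * M"
  define B where "B = mat_inv D"
  define cs where "cs = sorted_list_of_set (G t)"
  define ot where "ot = grp_off G t"
  define wt where "wt = w t"
  have wt: "wt > 0" using w_pos t unfolding wt_def by auto
  have Mc: "M \<in> carrier_mat p n" unfolding M_def p_def by (rule Lhat_carrier)
  have Dc: "D \<in> carrier_mat n n" unfolding D_def using Mc by auto
  obtain B' where "inverts_mat D B'" "inverts_mat B' D"
    using inv unfolding invertible_mat_def D_def M_def by blast
  then have "inverts_mat D B \<and> inverts_mat B D"
    unfolding B_def mat_inv_def using someI[of "\<lambda>B. inverts_mat D B \<and> inverts_mat B D" B'] by blast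
  then have DB: "D * B = 1\<^sub>m n" and BD: "B * D = 1\<^sub>m (dim_row B)"
    using Dc unfolding inverts_mat_def by auto
  have Bc: "B \<in> carrier_mat n n"
  proof -
    have "dim_col B = n" using arg_cong[OF DB, of dim_col] by simp
    moreover have "dim_row B = n" using arg_cong[OF BD, of dim_col] Dc by simp
    ultimately show ?thesis by auto
  qed
  have fin: "finite (G t)" using G_sub t finite_subset by blast
  have lencs: "length cs = card (G t)" unfolding cs_def using fin by simp
  have setcs: "set cs = G t" unfolding cs_def using fin by simp
  have dcs: "distinct cs" unfolding cs_def by simp
  have Jt: "Jblk G t = {ot..<ot + card (G t)}" unfolding Jblk_def ot_def using off_Suc by simp
  have Jp: "r < p" if "r \<in> Jblk G t" for r
  proof -
    have "Suc t \<le> N" using t by simp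
    then have "grp_off G (Suc t) \<le> p" unfolding p_def by (rule off_mono)
    then show ?thesis using that unfolding Jblk_def by simp
  qed
  have crn: "cs ! (r - ot) \<in> G t" "cs ! (r - ot) < n" if "r \<in> Jblk G t" for r
  proof -
    have "r - ot < length cs" using that Jt lencs by auto
    then show "cs ! (r - ot) \<in> G t" using setcs nth_mem by blast
    then show "cs ! (r - ot) < n" using G_sub t(1) by force
  qed
  have Mrow: "M $$ (r,c) = (if c = cs ! (r - ot) then wt else 0)" if "r \<in> Jblk G t" "c < n" for r c
  proof -
    have "r \<notin> Ezset G I" using that t J_disj unfolding Ezset_def by blast
    then have "M $$ (r,c) = Lmat n N G w $$ (r,c)"
      unfolding M_def using Lhat_entry[of r G N c n w I] Jp[OF that(1)] that unfolding p_def by simp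
    also have "\<dots> = (if c = cs ! (r - ot) then wt else 0)"
      using Lmat_blk[OF t(1) that(1) that(2)] unfolding cs_def ot_def wt_def by simp
    finally show ?thesis .
  qed
  have Ddiag: "D $$ (i,j) = 0" if ij: "i < n" "j < n" "i \<noteq> j" for i j
  proof -
    have "D $$ (i,j) = (\<Sum>r\<in>{0..<p}. M $$ (r,i) * M $$ (r,j))"
      unfolding D_def using Dentry[OF Mc ij(1,2)] .
    also have "\<dots> = 0"
    proof (rule sum.neutral, rule ballI)
      fix r assume r: "r \<in> {0..<p}"
      show "M $$ (r,i) * M $$ (r,j) = 0"
      proof (rule ccontr)
        assume "M $$ (r,i) * M $$ (r,j) \<noteq> 0"
        then have "M $$ (r,i) \<noteq> 0" "M $$ (r,j) \<noteq> 0" by auto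
        then obtain s s' where "s < N" "r \<in> Jblk G s" "i = sorted_list_of_set (G s) ! (r - grp_off G s)"
          "s' < N" "r \<in> Jblk G s'" "j = sorted_list_of_set (G s') ! (r - grp_off G s')"
          using Mnz[of r G N i n w I] Mnz[of r G N j n w I] r ij unfolding M_def p_def by auto
        then show False using J_disj[of r G s s'] ij by auto
      qed
    qed
    finally show ?thesis .
  qed
  have DBe: "D $$ (i,i) * B $$ (i,j) = (if i = j then 1 else 0)" if "i < n" "j < n" for i j
  proof -
    have "(D * B) $$ (i,j) = (\<Sum>l\<in>{0..<n}. D $$ (i,l) * B $$ (l,j))"
      using that Dc Bc by (auto simp: scalar_prod_def intro!: sum.cong)
    also have "\<dots> = (\<Sum>l\<in>{0..<n}. if l = i then D $$ (i,i) * B $$ (i,j) else 0)"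
      by (rule sum.cong) (use Ddiag that in auto)
    also have "\<dots> = D $$ (i,i) * B $$ (i,j)" using that by simp
    finally show ?thesis using DB that by simp
  qed
  have Dnz: "D $$ (i,i) \<noteq> 0" if "i < n" for i using DBe[OF that that] by auto
  have Bb: "(B *\<^sub>v b) $ c = b $ c / D $$ (c,c)" if "c < n" for c
  proof -
    have "(B *\<^sub>v b) $ c = (\<Sum>l\<in>{0..<n}. B $$ (c,l) * b $ l)"
      using that Bc b by (auto simp: scalar_prod_def intro!: sum.cong)
    also have "\<dots> = (\<Sum>l\<in>{0..<n}. if l = c then b $ c / D $$ (c,c) else 0)"
    proof (rule sum.cong)
      fix l assume l: "l \<in> {0..<n}"
      have "D $$ (c,c) * B $$ (c,l) = (if c = l then 1 else 0)" using DBe that l by auto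
      then show "B $$ (c,l) * b $ l = (if l = c then b $ c / D $$ (c,c) else 0)"
        using Dnz[OF that] by (auto simp: field_simps split: if_splits)
    qed simp
    also have "\<dots> = b $ c / D $$ (c,c)" using that by simp
    finally show ?thesis .
  qed
  have ur: "u_of n N G w I b $ r = wt * (b $ (cs ! (r - ot)) / D $$ (cs ! (r - ot), cs ! (r - ot)))"
    if r: "r \<in> Jblk G t" for r
  proof -
    have "u_of n N G w I b = M *\<^sub>v (B *\<^sub>v b)"
      unfolding u_of_def Let_def M_def[symmetric] D_def[symmetric] B_def[symmetric]
      using Mc Bc b by simp
    then have "u_of n N G w I b $ r = (\<Sum>c\<in>{0..<n}. M $$ (r,c) * (B *\<^sub>v b) $ c)"
      using Mc Bc Jp[OF r] by (auto simp: scalar_prod_def intro!: sum.cong)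
    also have "\<dots> = (\<Sum>c\<in>{0..<n}. if c = cs ! (r - ot) then wt * (B *\<^sub>v b) $ (cs ! (r - ot)) else 0)"
      by (rule sum.cong) (use Mrow[OF r] in auto)
    also have "\<dots> = wt * (B *\<^sub>v b) $ (cs ! (r - ot))" using crn[OF r] by simp
    finally show ?thesis using Bb crn[OF r] by simp
  qed
  have Dge: "D $$ (cs ! (r - ot), cs ! (r - ot)) \<ge> wt^2" if r: "r \<in> Jblk G t" for r
  proof -
    let ?c = "cs ! (r - ot)"
    have "D $$ (?c, ?c) = (\<Sum>r'\<in>{0..<p}. M $$ (r',?c) * M $$ (r',?c))"
      unfolding D_def using Dentry[OF Mc crn(2)[OF r] crn(2)[OF r]] .
    also have "\<dots> \<ge> M $$ (r,?c) * M $$ (r,?c)"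
      by (rule member_le_sum[of r]) (use Jp[OF r] in auto)
    finally show ?thesis using Mrow[OF r crn(2)[OF r]] by (simp add: power2_eq_square)
  qed
  have termle: "(u_of n N G w I b $ r)^2 \<le> (b $ (cs ! (r - ot)))^2 / wt^2" if r: "r \<in> Jblk G t" for r
  proof -
    define d where "d = D $$ (cs ! (r - ot), cs ! (r - ot))"
    define z where "z = b $ (cs ! (r - ot))"
    have d: "d \<ge> wt^2" using Dge[OF r] unfolding d_def .
    have dpos: "d > 0" using d wt by (smt (verit) zero_less_power)
    have "(u_of n N G w I b $ r)^2 = wt^2 * z^2 / d^2" using ur[OF r] unfolding d_def z_def
      by (simp add: power_divide power_mult_distrib)
    also have "\<dots> \<le> wt^2 * z^2 / (wt^2)^2"
      by (intro divide_left_mono mult_nonneg_nonneg power_mono mult_pos_pos) (use d wt dpos in auto)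
    also have "\<dots> = z^2 / wt^2" using wt by (simp add: power2_eq_square field_simps)
    finally show ?thesis unfolding z_def .
  qed
  have bij: "bij_betw (\<lambda>r. cs ! (r - ot)) (Jblk G t) (G t)"
  proof -
    have "bij_betw ((!) cs \<circ> (\<lambda>r. r - ot)) (Jblk G t) (G t)"
      unfolding Jt by (rule bij_betw_trans[OF shift_bij bij_betw_nth]) (use dcs lencs setcs in auto)
    then show ?thesis by (simp add: comp_def)
  qed
  have "(\<Sum>r\<in>Jblk G t. (u_of n N G w I b $ r)^2) \<le> (\<Sum>r\<in>Jblk G t. (b $ (cs ! (r - ot)))^2 / wt^2)"
    by (rule sum_mono) (rule termle)
  also have "\<dots> = (\<Sum>c\<in>G t. (b $ c)^2 / wt^2)"
    by (rule sum.reindex_bij_betw[OF bij])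
  also have "\<dots> = (\<Sum>c\<in>G t. (b $ c)^2) / wt^2" by (simp add: sum_divide_distrib)
  also have "\<dots> \<le> 1"
  proof -
    have "sqrt (\<Sum>c\<in>G t. (b $ c)^2) \<le> wt" using bn unfolding subnorm_def wt_def .
    then have "(\<Sum>c\<in>G t. (b $ c)^2) \<le> wt^2"
      by (metis real_sqrt_le_iff real_sqrt_pow2 sum_nonneg zero_le_power2 power_mono real_sqrt_ge_zero)
    then show ?thesis using wt by simp
  qed
  finally show ?thesis unfolding subnorm_def by simp
qed

theorem lemma4p1:
  fixes n N m :: nat and G :: "nat \<Rightarrow> nat set" and w :: "nat \<Rightarrow> real"
    and A :: "real mat" and y :: "real vec" and lam :: real
    and Is :: "nat \<Rightarrow> nat set" and x :: "nat \<Rightarrow> real vec"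
    and Ibar :: "nat set" and xt :: "real vec"
  assumes G_ne: "\<forall>t<N. G t \<noteq> {}"
    and G_sub: "\<forall>t<N. G t \<subseteq> {0..<n}"
    and G_cover: "(\<Union>t<N. G t) = {0..<n}"
    and w_pos: "\<forall>t<N. w t > 0"
    and A_dim: "A \<in> carrier_mat m n"
    and y_dim: "y \<in> carrier_vec m"
    and lam_pos: "lam > 0"
    and Lhat_inv: "\<forall>I \<subseteq> {0..<N}. invertible_mat
        (transpose_mat (Lhat n N G w I) * Lhat n N G w I)"
    and I0: "Is 0 \<subseteq> {0..<N}"
    and x_dim: "\<forall>k. x k \<in> carrier_vec n"
    and scheme: "ada_option1 N G w A y lam Is x \<or> ada_option2 n N G w A y lam Is x"
    and stab: "\<exists>K. \<forall>k\<ge>K. Is k = Ibar"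
    and xt_dim: "xt \<in> carrier_vec n"
    and conv: "\<forall>i<n. (\<lambda>k. x k $ i) \<longlonglongrightarrow> xt $ i"
  shows "\<forall>t \<in> {0..<N} - Ibar.
           subnorm (u_of n N G w Ibar (beta_of A y lam xt)) (Jblk G t) \<le> 1"
proof -
  obtain K where K: "\<forall>k\<ge>K. Is k = Ibar" using stab by blast
  have Isub: "Is k \<subseteq> {0..<N}" for k
  proof (induction k)
    case 0 then show ?case using I0 by simp
  next
    case (Suc k)
    show ?case
    proof (cases "ada_option1 N G w A y lam Is x")
      case True
      then have "Is (Suc k) = Is k \<union> {t \<in> {0..<N}. subnorm (beta_of A y lam (x (Suc k))) (G t) \<ge> w t}"
        unfolding ada_option1_def by blast
      then show ?thesis using Suc by auto
    next
      case False
      then have "ada_option2 n N G w A y lam Is x" using scheme by blast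
      then have "Is (Suc k) = Is k \<union> {t \<in> {0..<N}. subnorm (u_of n N G w (Is k) (beta_of A y lam (x (Suc k)))) (Jblk G t) \<ge> 1}"
        unfolding ada_option2_def by blast
      then show ?thesis using Suc by auto
    qed
  qed
  have Ibar_sub: "Ibar \<subseteq> {0..<N}" using Isub[of K] K by auto
  have bt: "\<forall>j<n. (\<lambda>k. beta_of A y lam (x k) $ j) \<longlonglongrightarrow> beta_of A y lam xt $ j"
    by (rule beta_tendsto[OF A_dim y_dim x_dim xt_dim conv])
  have bts: "\<forall>j<n. (\<lambda>k. beta_of A y lam (x (Suc k)) $ j) \<longlonglongrightarrow> beta_of A y lam xt $ j"
    using bt by (auto intro: LIMSEQ_Suc)
  have bdim: "dim_vec (beta_of A y lam v) = n" for v
    unfolding beta_of_def using A_dim by simp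
  show ?thesis
  proof
    fix t assume tt: "t \<in> {0..<N} - Ibar"
    show "subnorm (u_of n N G w Ibar (beta_of A y lam xt)) (Jblk G t) \<le> 1"
    proof (cases "ada_option1 N G w A y lam Is x")
      case True
      have ev: "\<forall>k\<ge>K. subnorm (beta_of A y lam (x (Suc k))) (G t) \<le> w t"
      proof (intro allI impI)
        fix k assume k: "k \<ge> K"
        have "Is (Suc k) = Is k \<union> {t \<in> {0..<N}. subnorm (beta_of A y lam (x (Suc k))) (G t) \<ge> w t}"
          using True unfolding ada_option1_def by blast
        moreover have "Is (Suc k) = Ibar" using K k by auto
        ultimately have "t \<notin> {t \<in> {0..<N}. subnorm (beta_of A y lam (x (Suc k))) (G t) \<ge> w t}"
          using tt by blast
        then have "\<not> subnorm (beta_of A y lam (x (Suc k))) (G t) \<ge> w t" using tt by simp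
        then show "subnorm (beta_of A y lam (x (Suc k))) (G t) \<le> w t" by simp
      qed
      have "G t \<subseteq> {0..<n}" using G_sub tt by simp
      then have fin: "finite (G t)" using finite_subset by blast
      have "(\<lambda>k. subnorm (beta_of A y lam (x (Suc k))) (G t)) \<longlonglongrightarrow> subnorm (beta_of A y lam xt) (G t)"
      proof (rule subnorm_tendsto[OF fin], rule ballI)
        fix i assume "i \<in> G t"
        then have "i < n" using G_sub tt by force
        then show "(\<lambda>k. beta_of A y lam (x (Suc k)) $ i) \<longlonglongrightarrow> beta_of A y lam xt $ i" using bts by blast
      qed
      then have bn: "subnorm (beta_of A y lam xt) (G t) \<le> w t"
        by (rule LIMSEQ_le_const2) (use ev in blast)
      have inv: "invertible_mat (transpose_mat (Lhat n N G w Ibar) * Lhat n N G w Ibar)"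
        using Lhat_inv Ibar_sub by blast
      have t1: "t < N" "t \<notin> Ibar" using tt by auto
      have bc: "beta_of A y lam xt \<in> carrier_vec n" by (rule carrier_vecI) (rule bdim)
      show ?thesis by (rule alg[OF G_sub w_pos inv t1 bc bn])
    next
      case False
      then have o2: "ada_option2 n N G w A y lam Is x" using scheme by blast
      have ev: "\<forall>k\<ge>K. subnorm (u_of n N G w Ibar (beta_of A y lam (x (Suc k)))) (Jblk G t) \<le> 1"
      proof (intro allI impI)
        fix k assume k: "k \<ge> K"
        have "Is (Suc k) = Is k \<union> {t \<in> {0..<N}. subnorm (u_of n N G w (Is k) (beta_of A y lam (x (Suc k)))) (Jblk G t) \<ge> 1}"
          using o2 unfolding ada_option2_def by blast
        then have "{t \<in> {0..<N}. subnorm (u_of n N G w (Is k) (beta_of A y lam (x (Suc k)))) (Jblk G t) \<ge> 1} \<subseteq> Is (Suc k)"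
          by (rule equalityD2[THEN subset_trans[rotated]]) simp
        moreover have e1: "Is (Suc k) = Ibar" and e2: "Is k = Ibar" using K k by auto
        ultimately have "{t \<in> {0..<N}. subnorm (u_of n N G w Ibar (beta_of A y lam (x (Suc k)))) (Jblk G t) \<ge> 1} \<subseteq> Ibar"
          by (simp only: e1 e2)
        then have "t \<notin> {t \<in> {0..<N}. subnorm (u_of n N G w Ibar (beta_of A y lam (x (Suc k)))) (Jblk G t) \<ge> 1}"
          using tt by blast
        then have "\<not> subnorm (u_of n N G w Ibar (beta_of A y lam (x (Suc k)))) (Jblk G t) \<ge> 1" using tt by simp
        then show "subnorm (u_of n N G w Ibar (beta_of A y lam (x (Suc k)))) (Jblk G t) \<le> 1" by simp
      qed
      have fin: "finite (Jblk G t)" unfolding Jblk_def by simp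
      have Jp: "r < grp_off G N" if "r \<in> Jblk G t" for r
      proof -
        have "Suc t \<le> N" using tt by simp
        then have "grp_off G (Suc t) \<le> grp_off G N" by (rule off_mono)
        then show ?thesis using that unfolding Jblk_def by simp
      qed
      have "(\<lambda>k. subnorm (u_of n N G w Ibar (beta_of A y lam (x (Suc k)))) (Jblk G t))
            \<longlonglongrightarrow> subnorm (u_of n N G w Ibar (beta_of A y lam xt)) (Jblk G t)"
      proof (rule subnorm_tendsto[OF fin], rule ballI)
        fix r assume r: "r \<in> Jblk G t"
        let ?Q = "Lhat n N G w Ibar * mat_inv (transpose_mat (Lhat n N G w Ibar) * Lhat n N G w Ibar)"
        have q1: "dim_row ?Q = dim_row (Lhat n N G w Ibar)" by (rule index_mult_mat(2))
        have q2: "dim_row (Lhat n N G w Ibar) = grp_off G N" by (rule carrier_matD(1)[OF Lhat_carrier])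
        have rQ: "r < dim_row ?Q" unfolding q1 q2 by (rule Jp[OF r])
        have d1: "\<forall>k. dim_vec (beta_of A y lam (x (Suc k))) = n" using bdim by blast
        have "(\<lambda>k. (?Q *\<^sub>v beta_of A y lam (x (Suc k))) $ r) \<longlonglongrightarrow> (?Q *\<^sub>v beta_of A y lam xt) $ r"
          by (rule mv_tendsto[OF bts d1 bdim rQ])
        then show "(\<lambda>k. u_of n N G w Ibar (beta_of A y lam (x (Suc k))) $ r) \<longlonglongrightarrow> u_of n N G w Ibar (beta_of A y lam xt) $ r"
          unfolding u_of_def Let_def .
      qed
      then show ?thesis by (rule LIMSEQ_le_const2) (use ev in blast)
    qed
  qed
qed

end
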